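(* Let $A\in\mathbb{R}^{n\times d}$, $S\in\mathbb{R}^{d\times m}$, $\lambda>0$, and let $f:\mathbb{R}^n\to\mathbb{R}$ be convex and differentiable with $\mu$-Lipschitz gradient. Let $x^*$ be the unique minimizer of $x\mapsto f(Ax)+\frac{\lambda}{2}\|x\|_2^2$ over $\mathbb{R}^d$, let $\alpha^*$ be any minimizer of $\alpha\mapsto f(AS\alpha)+\frac{\lambda}{2}\|S\alpha\|_2^2$ over $\mathbb{R}^m$, and set $\widetilde{x}=-\frac{1}{\lambda}A^\top\nabla f(AS\alpha^* )$. If $\lambda\ge 2\mu Z_f^2$, then $$\|\widetilde{x}-x^*\|_2\le\sqrt{\frac{\mu}{2\lambda}}\,Z_f\,\|x^*\|_2,$$ and consequently $$\|\widetilde{x}-x^*\|_2\le\sqrt{\frac{\mu}{2\lambda}}\,\|P_S^\perp A^\top\|_2\,\|x^*\|_2 .$$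
   Context: $f^*(z)=\sup_{w}\{w^\top z-f(w)\}$ is the Fenchel conjugate of $f$, with domain $\mathrm{dom} f^*=\{z: f^*(z)<+\infty\}$. $z^*=\nabla f(Ax^* )$ is the (unique) solution of the dual problem $\max_z -f^*(z)-\frac{1}{2\lambda}\|A^\top z\|_2^2$. $P_S=S(S^\top S)^\dagger S^\top$ is the orthogonal projector onto $\mathrm{range}(S)$ and $P_S^\perp=I_d-P_S$. The quantity $Z_f=Z_f(A,S)$ is defined by $$Z_f(A,S)=\sup_{\Delta\in(\mathrm{dom} f^*-z^* ),\,\Delta\neq 0}\left(\frac{\Delta^\top A P_S^\perp A^\top\Delta}{\|\Delta\|_2^2}\right)^{1/2}.$$ $\|\cdot\|_2$ on matrices is the spectral norm. *)

theory Defs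
  imports "HOL-Analysis.Analysis"
begin

definition pinv :: "real^'n^'m \<Rightarrow> real^'m^'n" where
  "pinv M = (SOME X. M ** X ** M = M \<and> X ** M ** X = X \<and>
              transpose (M ** X) = M ** X \<and> transpose (X ** M) = X ** M)"

definition projS :: "real^'m^'d \<Rightarrow> real^'d^'d" where
  "projS S = S ** pinv (transpose S ** S) ** transpose S"

definition projS_perp :: "real^'m^'d \<Rightarrow> real^'d^'d" where
  "projS_perp S = mat 1 - projS S"

definition fconj :: "(real^'n \<Rightarrow> real) \<Rightarrow> real^'n \<Rightarrow> ereal" where
  "fconj f z = (SUP w. ereal (w \<bullet> z - f w))"

definition fconj_dom :: "(real^'n \<Rightarrow> real) \<Rightarrow> (real^'n) set" where
  "fconj_dom f = {z. fconj f z < \<infinity>}"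

text \<open>The quantity Z_f(A,S), for the dual solution zstar. The supremum is of a bounded set
  of nonnegative reals; 0 is included so that the empty case gives 0.\<close>
definition Zf :: "(real^'n \<Rightarrow> real) \<Rightarrow> real^'d^'n \<Rightarrow> real^'m^'d \<Rightarrow> real^'n \<Rightarrow> real" where
  "Zf f A S zstar = Sup (insert 0
     {sqrt ((\<Delta> \<bullet> ((A ** projS_perp S ** transpose A) *v \<Delta>)) / (norm \<Delta>)^2) | \<Delta>.
        \<Delta> \<in> (\<lambda>z. z - zstar) ` fconj_dom f \<and> \<Delta> \<noteq> 0})"

end

theory Submission
  imports Defs
begin
lemma line_deriv:
  fixes f :: "'a::real_inner \<Rightarrow> real"
  assumes grad: "\<And>u. (f has_derivative (\<lambda>h. g u \<bullet> h)) (at u)"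
  shows "((\<lambda>t. f (x + t *\<^sub>R d)) has_real_derivative (g (x + t *\<^sub>R d) \<bullet> d)) (at t)"
proof -
  have l: "((\<lambda>t. x + t *\<^sub>R d) has_derivative (\<lambda>h. h *\<^sub>R d)) (at t)"
    by (auto intro!: derivative_eq_intros)
  have "((\<lambda>t. f (x + t *\<^sub>R d)) has_derivative (\<lambda>h. g (x + t *\<^sub>R d) \<bullet> (h *\<^sub>R d))) (at t)"
    using has_derivative_compose[OF l grad] by (simp add: o_def)
  moreover have "(\<lambda>h. g (x + t *\<^sub>R d) \<bullet> (h *\<^sub>R d)) = (*) (g (x + t *\<^sub>R d) \<bullet> d)"
    by (auto simp: fun_eq_iff)
  ultimately show ?thesis by (simp add: has_field_derivative_def)
qed

lemma grad_ineq:
  fixes f :: "'a::real_inner \<Rightarrow> real"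
  assumes convex: "convex_on UNIV f"
    and grad: "\<And>u. (f has_derivative (\<lambda>h. g u \<bullet> h)) (at u)"
  shows "f x + g x \<bullet> (y - x) \<le> f y"
proof -
  define phi where "phi = (\<lambda>t::real. f (x + t *\<^sub>R (y - x)))"
  have cphi: "convex_on UNIV phi"
  proof (rule convex_onI)
    fix t a b :: real assume t: "0 < t" "t < 1"
    have eq: "x + ((1 - t) * a + t * b) *\<^sub>R (y - x) = (1 - t) *\<^sub>R (x + a *\<^sub>R (y - x)) + t *\<^sub>R (x + b *\<^sub>R (y - x))"
      by (simp add: algebra_simps)
    show "phi ((1 - t) *\<^sub>R a + t *\<^sub>R b) \<le> (1 - t) * phi a + t * phi b"
      unfolding phi_def using eq convex_onD[OF convex, of t "x + a *\<^sub>R (y - x)" "x + b *\<^sub>R (y - x)"] t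
      by simp
  qed simp
  have d: "(phi has_real_derivative (g x \<bullet> (y - x))) (at 0 within UNIV)"
    unfolding phi_def using line_deriv[OF grad, of x "y - x" 0] by simp
  have "(g x \<bullet> (y - x)) * (1 - 0) \<le> phi 1 - phi 0"
    by (rule convex_on_imp_above_tangent[OF cphi _ _ _ d]) auto
  then show ?thesis by (simp add: phi_def)
qed

lemma descent:
  fixes f :: "'a::real_inner \<Rightarrow> real"
  assumes grad: "\<And>u. (f has_derivative (\<lambda>h. g u \<bullet> h)) (at u)"
    and lip: "\<And>u v. norm (g u - g v) \<le> mu * norm (u - v)"
  shows "f y \<le> f x + g x \<bullet> (y - x) + mu / 2 * (norm (y - x))^2"
proof -
  define d where "d = y - x"
  define h where "h = (\<lambda>t. f (x + t *\<^sub>R d) - t * (g x \<bullet> d) - mu / 2 * t^2 * (norm d)^2)"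
  have "h 1 \<le> h 0"
  proof (rule DERIV_nonpos_imp_nonincreasing[of 0 1])
    fix t :: real assume t: "0 \<le> t" "t \<le> 1"
    have D: "(h has_real_derivative (g (x + t *\<^sub>R d) \<bullet> d - g x \<bullet> d - mu * t * (norm d)^2)) (at t)"
      unfolding h_def
      by (rule derivative_eq_intros line_deriv[OF grad] | simp)+
    have "g (x + t *\<^sub>R d) \<bullet> d - g x \<bullet> d = (g (x + t *\<^sub>R d) - g x) \<bullet> d"
      by (simp add: inner_diff_left)
    also have "\<dots> \<le> norm (g (x + t *\<^sub>R d) - g x) * norm d"
      by (rule norm_cauchy_schwarz)
    also have "\<dots> \<le> mu * norm (t *\<^sub>R d) * norm d"
      using lip[of "x + t *\<^sub>R d" x] by (simp add: mult_right_mono)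
    also have "\<dots> = mu * t * (norm d)^2" using t by (simp add: power2_eq_square)
    finally show "\<exists>y. (h has_real_derivative y) (at t) \<and> y \<le> 0"
      using D by (intro exI[of _ "g (x + t *\<^sub>R d) \<bullet> d - g x \<bullet> d - mu * t * (norm d)^2"]) auto
  qed simp
  then show ?thesis by (simp add: h_def d_def)
qed

lemma cocoercive:
  fixes f :: "'a::real_inner \<Rightarrow> real"
  assumes convex: "convex_on UNIV f"
    and grad: "\<And>u. (f has_derivative (\<lambda>h. g u \<bullet> h)) (at u)"
    and lip: "\<And>u v. norm (g u - g v) \<le> mu * norm (u - v)"
    and mu: "mu > 0"
  shows "(norm (g x - g y))^2 \<le> mu * ((g x - g y) \<bullet> (x - y))"
proof -
  have half: "f a + g a \<bullet> (b - a) + (norm (g b - g a))^2 / (2 * mu) \<le> f b" for a b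
  proof -
    define D where "D = g b - g a"
    define z where "z = b - (1 / mu) *\<^sub>R D"
    have 1: "f a + g a \<bullet> (z - a) \<le> f z" by (rule grad_ineq[OF convex grad])
    have 2: "f z \<le> f b + g b \<bullet> (z - b) + mu / 2 * (norm (z - b))^2" by (rule descent[OF grad lip])
    have zb: "z - b = - (1 / mu) *\<^sub>R D" by (simp add: z_def)
    have e1: "g a \<bullet> (z - a) = g a \<bullet> (b - a) + g a \<bullet> (z - b)" by (simp add: inner_diff_right)
    have e2: "g b \<bullet> (z - b) - g a \<bullet> (z - b) = -((norm D)^2 / mu)"
      unfolding zb D_def by (simp add: power2_norm_eq_inner inner_diff_left diff_divide_distrib)
    have e3: "mu / 2 * (norm (z - b))^2 = (norm D)^2 / (2 * mu)"
      unfolding zb using mu by (simp add: power2_eq_square field_simps)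
    show ?thesis using 1 2 e1 e2 e3 unfolding D_def by (simp add: field_simps) 
  qed
  have "f x + g x \<bullet> (y - x) + (norm (g y - g x))^2 / (2 * mu) \<le> f y" by (rule half)
  moreover have "f y + g y \<bullet> (x - y) + (norm (g x - g y))^2 / (2 * mu) \<le> f x" by (rule half)
  moreover have "norm (g y - g x) = norm (g x - g y)" by (rule norm_minus_commute)
  moreover have "g x \<bullet> (y - x) + g y \<bullet> (x - y) = - ((g x - g y) \<bullet> (x - y))"
    by (simp add: algebra_simps inner_diff_left inner_diff_right inner_commute)
  ultimately have "(norm (g x - g y))^2 / mu \<le> (g x - g y) \<bullet> (x - y)"
    by (simp add: field_simps)
  then show ?thesis using mu by (simp add: field_simps)
qed



lemma inner_matrix_transpose:
  fixes M :: "real^'a^'b"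
  shows "(M *v x) \<bullet> y = x \<bullet> (transpose M *v y)"
  by (metis dot_lmul_matrix transpose_matrix_vector inner_commute)

lemma sym_matrixI:
  fixes M :: "real^'a^'a"
  assumes "\<And>x y. (M *v x) \<bullet> y = x \<bullet> (M *v y)"
  shows "transpose M = M"
proof -
  have "transpose M *v y = M *v y" for y
  proof -
    define v where "v = transpose M *v y - M *v y"
    have "v \<bullet> v = v \<bullet> (transpose M *v y) - v \<bullet> (M *v y)"
      by (simp add: v_def inner_diff_right)
    also have "\<dots> = 0" using assms[of v y] inner_matrix_transpose[of M v y] by simp
    finally show ?thesis by (simp add: v_def)
  qed
  then show ?thesis by (simp add: matrix_eq)
qed

lemma pinv_exists:
  fixes G :: "real^'m^'m"
  assumes sym: "transpose G = G"
  shows "\<exists>X. G ** X ** G = G \<and> X ** G ** X = X \<and>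
              transpose (G ** X) = G ** X \<and> transpose (X ** G) = X ** G"
proof -
  have symv: "(G *v x) \<bullet> y = x \<bullet> (G *v y)" for x y
    using inner_matrix_transpose[of G x y] sym by simp
  define R where "R = range (\<lambda>v. G *v v)"
  have subR: "subspace R" unfolding R_def
    by (rule real_vector.linear_subspace_image) (auto simp: subspace_UNIV)
  then obtain B where B: "0 \<notin> B" "B \<subseteq> R" "pairwise orthogonal B" "independent B"
      "card B = dim R" "span B = R"
    by (rule orthogonal_basis_subspace)
  define P where "P = (\<lambda>x. \<Sum>b\<in>B. (b \<bullet> x / (b \<bullet> b)) *\<^sub>R b)"
  have PR: "P x \<in> R" for x
    unfolding P_def B(6)[symmetric] by (intro span_sum span_mul span_base)
  have orth: "w \<bullet> (x - P x) = 0" if "w \<in> R" for w x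
    using Gram_Schmidt_step[OF B(3), of w x] that B(6) unfolding P_def orthogonal_def by simp
  have linP: "linear P"
    unfolding P_def
    by (rule linearI)
       (auto simp: inner_add_right add_divide_distrib scaleR_add_left sum.distrib scaleR_sum_right)
  have Pid: "P r = r" if "r \<in> R" for r
  proof -
    have "r - P r \<in> R" using that PR subR by (simp add: subspace_diff)
    then have "(r - P r) \<bullet> (r - P r) = 0" using orth by blast
    then show ?thesis by simp
  qed
  have GP: "G *v P x = G *v x" for x
  proof -
    have "(G *v (x - P x)) \<bullet> u = 0" for u
      using orth[of "G *v u" x] symv[of "x - P x" u] by (simp add: R_def inner_commute)
    then have "(G *v (x - P x)) \<bullet> (G *v (x - P x)) = 0" by blast
    then show ?thesis by (simp add: matrix_vector_mult_diff_distrib)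
  qed
  have spanR: "span R = R" using subR by (simp add: span_eq_iff)
  have inj: "inj_on (\<lambda>v. G *v v) (span R)"
  proof (rule inj_onI)
    fix r r' assume r: "r \<in> span R" "r' \<in> span R" and e: "G *v r = G *v r'"
    have "r - r' \<in> R" using r subR spanR by (simp add: subspace_diff)
    then obtain u where u: "r - r' = G *v u" by (auto simp: R_def)
    have "(r - r') \<bullet> (r - r') = u \<bullet> (G *v (r - r'))" using symv[of u "r - r'"] u by simp
    also have "\<dots> = 0" using e by (simp add: matrix_vector_mult_diff_distrib)
    finally show "r = r'" by simp
  qed
  obtain h where h: "range h \<subseteq> span R" "linear h" "\<forall>x\<in>span R. h (G *v x) = x"
    using real_vector.linear_inj_on_left_inverse[OF matrix_vector_mul_linear inj] by blast
  define X where "X = matrix (h \<circ> P)"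
  have Xv: "X *v v = h (P v)" for v
    unfolding X_def using matrix_vector_mul(2)[OF linear_compose[OF linP h(2)]]
    by (metis comp_apply)
  have XR: "X *v v \<in> R" for v using h(1) spanR Xv by auto
  have GX: "G *v (X *v v) = P v" for v
  proof -
    obtain u where u: "P v = G *v u" using PR[of v] by (auto simp: R_def)
    have "h (P v) = P u" using h(3) PR[of u] spanR u GP[of u] by auto
    then show ?thesis using Xv GP u by simp
  qed
  have XG: "X *v (G *v v) = P v" for v
  proof -
    have "G *v v \<in> R" by (simp add: R_def)
    then have "P (G *v v) = G *v v" by (rule Pid)
    then show ?thesis using Xv h(3) PR[of v] spanR GP[of v] by auto
  qed
  have Psym: "P x \<bullet> y = x \<bullet> P y" for x y
  proof -
    have "P x \<bullet> y = P x \<bullet> P y + P x \<bullet> (y - P y)" by (simp add: inner_diff_right)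
    also have "\<dots> = P x \<bullet> P y" using orth[OF PR[of x], of y] by simp
    also have "x \<bullet> P y = P x \<bullet> P y + (x - P x) \<bullet> P y" by (simp add: inner_diff_left)
    then have "x \<bullet> P y = P x \<bullet> P y" using orth[OF PR[of y], of x] by (simp add: inner_commute)
    ultimately show ?thesis by simp
  qed
  have 1: "G ** X ** G = G"
    by (simp add: matrix_eq matrix_vector_mul_assoc[symmetric] XG GP)
  have XGX: "X *v (G *v (X *v v)) = X *v v" for v
  proof -
    have "X *v (G *v (X *v v)) = X *v (P v)" by (simp only: GX)
    also have "\<dots> = h (P (P v))" by (simp only: Xv)
    also have "\<dots> = h (P v)" by (simp add: Pid PR)
    also have "\<dots> = X *v v" by (simp only: Xv)
    finally show ?thesis .
  qed
  have 2: "X ** G ** X = X"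
    by (simp only: matrix_eq matrix_vector_mul_assoc[symmetric] XGX) simp
  have 3: "transpose (G ** X) = G ** X"
    by (rule sym_matrixI) (simp add: matrix_vector_mul_assoc[symmetric] GX Psym)
  have 4: "transpose (X ** G) = X ** G"
    by (rule sym_matrixI) (simp add: matrix_vector_mul_assoc[symmetric] XG Psym)
  show ?thesis using 1 2 3 4 by blast
qed



lemma pinv_props:
  fixes G :: "real^'m^'m"
  assumes "transpose G = G"
  shows "G ** pinv G ** G = G \<and> pinv G ** G ** pinv G = pinv G \<and>
         transpose (G ** pinv G) = G ** pinv G \<and> transpose (pinv G ** G) = pinv G ** G"
  unfolding pinv_def by (rule someI_ex[OF pinv_exists[OF assms]])

lemma gram_sym: "transpose (transpose S ** S) = transpose S ** (S :: real^'m^'d)"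
  by (simp add: matrix_transpose_mul)

lemma SYG:
  fixes S :: "real^'m^'d" and Y :: "real^'m^'m"
  assumes GYG: "(transpose S ** S) ** Y ** (transpose S ** S) = transpose S ** S"
  shows "S ** Y ** (transpose S ** S) = S"
proof -
  define G where "G = transpose S ** S"
  have SS: "(S *v a) \<bullet> (S *v b) = a \<bullet> (G *v b)" for a b
    by (simp add: G_def inner_matrix_transpose matrix_vector_mul_assoc)
  have symv: "(G *v a) \<bullet> b = a \<bullet> (G *v b)" for a b
    using inner_matrix_transpose[of G a b] gram_sym[of S] by (simp add: G_def)
  have GYGv: "G *v (Y *v (G *v v)) = G *v v" for v
    using GYG by (simp add: G_def matrix_vector_mul_assoc matrix_mul_assoc)
  have "S *v (Y *v (G *v v)) = S *v v" for v
  proof -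
    define y where "y = Y *v (G *v v)"
    have "(S *v y - S *v v) \<bullet> (S *v y - S *v v) = y \<bullet> (G *v y) - y \<bullet> (G *v v) - v \<bullet> (G *v y) + v \<bullet> (G *v v)"
      by (simp add: inner_diff_left inner_diff_right SS)
    also have "y \<bullet> (G *v v) = v \<bullet> (G *v v)"
      using symv[of y v] GYGv[of v] by (simp add: y_def inner_commute)
    also have "y \<bullet> (G *v y) = v \<bullet> (G *v v)"
      using symv[of y v] GYGv[of v] by (simp add: y_def inner_commute)
    also have "v \<bullet> (G *v y) = v \<bullet> (G *v v)"
      using GYGv[of v] by (simp add: y_def)
    finally have "(S *v y - S *v v) \<bullet> (S *v y - S *v v) = 0" by simp
    then show ?thesis by (simp add: y_def)
  qed
  then show ?thesis by (simp add: matrix_eq matrix_vector_mul_assoc[symmetric] G_def)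
qed

lemma projS_facts:
  fixes S :: "real^'m^'d"
  shows "transpose (projS S) = projS S" and "projS S ** projS S = projS S"
    and "\<And>x a. transpose S *v x = transpose S *v (S *v a) \<Longrightarrow> projS S *v x = S *v a"
proof -
  define G where "G = transpose S ** S"
  define X where "X = pinv G"
  have Gs: "transpose G = G" by (simp add: G_def gram_sym)
  note pp = pinv_props[OF Gs, folded X_def]
  have GXG: "G ** X ** G = G" and XGX: "X ** G ** X = X" using pp by auto
  have GXtG: "G ** transpose X ** G = G"
    using arg_cong[OF GXG, of transpose] Gs by (simp add: matrix_transpose_mul matrix_mul_assoc)
  have SXG: "S ** X ** G = S" using SYG[of S X] GXG by (simp add: G_def)
  have SXtG: "S ** transpose X ** G = S" using SYG[of S "transpose X"] GXtG by (simp add: G_def)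
  have P: "projS S = S ** X ** transpose S" by (simp add: projS_def G_def X_def)
  have PP: "projS S ** projS S = projS S"
  proof -
    have "projS S ** projS S = S ** (X ** G ** X) ** transpose S"
      by (simp add: P G_def matrix_mul_assoc)
    then show ?thesis using XGX P by simp
  qed
  have PtP: "transpose (projS S) ** projS S = projS S"
  proof -
    have "transpose (projS S) ** projS S = (S ** transpose X ** G) ** X ** transpose S"
      by (simp add: P G_def matrix_mul_assoc matrix_transpose_mul)
    then show ?thesis using SXtG P by simp
  qed
  have "transpose (projS S) = transpose (transpose (projS S) ** projS S)" using PtP by simp
  also have "\<dots> = transpose (projS S) ** projS S" by (simp add: matrix_transpose_mul)
  finally show "transpose (projS S) = projS S" using PtP by simp
  show "projS S ** projS S = projS S" by (rule PP)
  fix x a assume "transpose S *v x = transpose S *v (S *v a)"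
  then have "projS S *v x = S *v (X *v (G *v a))"
    by (simp add: P G_def matrix_vector_mul_assoc[symmetric])
  also have "\<dots> = S *v a" using SXG by (simp add: matrix_vector_mul_assoc matrix_mul_assoc)
  finally show "projS S *v x = S *v a" .
qed

lemma perp_facts:
  fixes S :: "real^'m^'d"
  shows "(projS_perp S *v a) \<bullet> b = a \<bullet> (projS_perp S *v b)"
    and "projS_perp S *v (projS_perp S *v a) = projS_perp S *v a"
    and "(projS_perp S *v a) \<bullet> (projS_perp S *v b) = a \<bullet> (projS_perp S *v b)"
proof -
  note pf = projS_facts[of S]
  have Ps: "(projS S *v a) \<bullet> b = a \<bullet> (projS S *v b)" for a b
    using inner_matrix_transpose[of "projS S" a b] pf(1) by simp
  have Pi: "projS S *v (projS S *v a) = projS S *v a" for a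
    using pf(2) by (simp add: matrix_vector_mul_assoc)
  have pv: "projS_perp S *v v = v - projS S *v v" for v
    by (simp add: projS_perp_def matrix_vector_mult_diff_rdistrib)
  show 1: "(projS_perp S *v a) \<bullet> b = a \<bullet> (projS_perp S *v b)" for a b
    using Ps[of a b] by (simp add: pv inner_diff_left inner_diff_right)
  show 2: "projS_perp S *v (projS_perp S *v a) = projS_perp S *v a" for a
    using Pi[of a] by (simp add: pv matrix_vector_mult_diff_distrib)
  show "(projS_perp S *v a) \<bullet> (projS_perp S *v b) = a \<bullet> (projS_perp S *v b)"
    using 1[of a "projS_perp S *v b"] 2[of b] by simp
qed



lemma opt_cond:
  fixes M :: "real^'k^'n" and N :: "real^'k^'j" and f :: "real^'n \<Rightarrow> real"
  assumes grad: "\<And>u. (f has_derivative (\<lambda>h. g u \<bullet> h)) (at u)"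
    and min: "\<And>y. f (M *v c) + lam / 2 * (norm (N *v c))^2 \<le> f (M *v y) + lam / 2 * (norm (N *v y))^2"
  shows "transpose M *v g (M *v c) + lam *\<^sub>R (transpose N *v (N *v c)) = 0"
proof -
  define phi where "phi = (\<lambda>y. f (M *v y) + lam / 2 * ((N *v y) \<bullet> (N *v y)))"
  have lM: "((\<lambda>y. M *v y) has_derivative (\<lambda>h. M *v h)) (at c)"
    by (rule bounded_linear_imp_has_derivative) simp
  have lN: "((\<lambda>y. N *v y) has_derivative (\<lambda>h. N *v h)) (at c)"
    by (rule bounded_linear_imp_has_derivative) simp
  have fM: "((\<lambda>y. f (M *v y)) has_derivative (\<lambda>h. g (M *v c) \<bullet> (M *v h))) (at c)"
    using has_derivative_compose[OF lM grad] by (simp add: o_def)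
  have D: "(phi has_derivative (\<lambda>h. g (M *v c) \<bullet> (M *v h) + lam / 2 * ((N *v c) \<bullet> (N *v h) + (N *v h) \<bullet> (N *v c)))) (at c)"
    unfolding phi_def
    by (intro has_derivative_add fM has_derivative_mult_right has_derivative_inner[OF lN lN])
  have "\<forall>\<^sub>F y in at c. phi c \<le> phi y"
    using min by (simp add: phi_def power2_norm_eq_inner)
  from has_derivative_local_min[OF D this]
  have z: "\<And>h. g (M *v c) \<bullet> (M *v h) + lam / 2 * ((N *v c) \<bullet> (N *v h) + (N *v h) \<bullet> (N *v c)) = 0"
    by (metis (no_types, lifting))
  define v where "v = transpose M *v g (M *v c) + lam *\<^sub>R (transpose N *v (N *v c))"
  have "v \<bullet> v = g (M *v c) \<bullet> (M *v v) + lam / 2 * ((N *v c) \<bullet> (N *v v) + (N *v v) \<bullet> (N *v c))"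
    unfolding v_def[of]
    by (simp add: inner_add_left dot_lmul_matrix v_def[symmetric] algebra_simps inner_commute[of "N *v c"])
  then have "v = 0" using z[of v] by simp
  then show ?thesis by (simp only: v_def)
qed


declare transpose_matrix_vector[simp del]

lemma matrix_vector_mult_neg[simp]: "(M :: real^'a^'b) *v (- v) = - (M *v v)"
  by (simp add: vec_eq_iff matrix_vector_mult_def sum_negf)


theorem theorem1:
  fixes A :: "real^'d^'n" and S :: "real^'m^'d" and lam mu :: real
    and f :: "real^'n \<Rightarrow> real" and g :: "real^'n \<Rightarrow> real^'n"
    and xstar :: "real^'d" and alpha :: "real^'m"
  assumes lam_pos: "lam > 0"
    and convex: "convex_on UNIV f"
    and grad: "\<And>u. (f has_derivative (\<lambda>h. g u \<bullet> h)) (at u)"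
    and lip: "\<And>u v. norm (g u - g v) \<le> mu * norm (u - v)"
    and xstar_min: "\<And>x. f (A *v xstar) + lam / 2 * (norm xstar)^2 \<le> f (A *v x) + lam / 2 * (norm x)^2"
    and alpha_min: "\<And>a. f (A *v (S *v alpha)) + lam / 2 * (norm (S *v alpha))^2
                        \<le> f (A *v (S *v a)) + lam / 2 * (norm (S *v a))^2"
    and lam_ge: "lam \<ge> 2 * mu * (Zf f A S (g (A *v xstar)))^2"
  shows "norm ((- (1 / lam)) *\<^sub>R (transpose A *v g (A *v (S *v alpha))) - xstar)
           \<le> sqrt (mu / (2 * lam)) * Zf f A S (g (A *v xstar)) * norm xstar
       \<and> norm ((- (1 / lam)) *\<^sub>R (transpose A *v g (A *v (S *v alpha))) - xstar)
           \<le> sqrt (mu / (2 * lam)) * onorm (\<lambda>v. (projS_perp S ** transpose A) *v v) * norm xstar"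
proof -
  define z0 where "z0 = g (A *v xstar)"
  define w where "w = A *v (S *v alpha)"
  define z1 where "z1 = g w"
  define D where "D = z1 - z0"
  define xt where "xt = (- (1 / lam)) *\<^sub>R (transpose A *v z1)"
  define e where "e = xt - xstar"
  define Pp where "Pp = projS_perp S"
  define Z where "Z = Zf f A S z0"
  define K where "K = onorm (\<lambda>v. (projS_perp S ** transpose A) *v v)"
  define X where "X = norm xstar"
  have opt1: "transpose A *v z0 = - lam *\<^sub>R xstar"
  proof -
    have "transpose A *v g (A *v xstar) + lam *\<^sub>R (transpose (mat 1) *v (mat 1 *v xstar)) = 0"
      by (rule opt_cond[OF grad]) (use xstar_min in simp)
    then show ?thesis by (simp add: z0_def eq_neg_iff_add_eq_0)
  qed
  have Atz1: "transpose A *v z1 = - lam *\<^sub>R xt"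
    using lam_pos by (simp add: xt_def)
  have opt2: "transpose S *v xt = transpose S *v (S *v alpha)"
  proof -
    have "transpose (A ** S) *v g ((A ** S) *v alpha) + lam *\<^sub>R (transpose S *v (S *v alpha)) = 0"
      by (rule opt_cond[OF grad]) (use alpha_min in \<open>simp add: matrix_vector_mul_assoc[symmetric]\<close>)
    moreover have "transpose (A ** S) *v g ((A ** S) *v alpha) = transpose S *v (transpose A *v z1)"
      by (simp only: matrix_transpose_mul matrix_vector_mul_assoc[symmetric] z1_def w_def)
    ultimately have "transpose S *v (transpose A *v z1) + lam *\<^sub>R (transpose S *v (S *v alpha)) = 0"
      by simp
    then have "transpose S *v (- lam *\<^sub>R xt) + lam *\<^sub>R (transpose S *v (S *v alpha)) = 0"
      by (simp add: Atz1)
    then have "transpose S *v (S *v alpha) = transpose S *v xt \<or> lam = 0"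
      by (simp add: matrix_vector_mult_scaleR algebra_simps)
    then show ?thesis using lam_pos by auto
  qed
  have PSa: "projS S *v xt = S *v alpha" by (rule projS_facts(3)[OF opt2])
  have Salpha: "S *v alpha = xt - Pp *v xt"
    by (simp add: Pp_def projS_perp_def matrix_vector_mult_diff_rdistrib PSa)
  have AtD: "transpose A *v D = - lam *\<^sub>R e"
    by (simp add: D_def e_def matrix_vector_mult_diff_distrib Atz1 opt1 algebra_simps)
  have quad: "\<Delta> \<bullet> ((A ** Pp ** transpose A) *v \<Delta>) = (norm (Pp *v (transpose A *v \<Delta>)))^2" for \<Delta>
  proof -
    have "\<Delta> \<bullet> ((A ** Pp ** transpose A) *v \<Delta>) = (transpose A *v \<Delta>) \<bullet> (Pp *v (transpose A *v \<Delta>))"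
      using inner_matrix_transpose[of A "Pp *v (transpose A *v \<Delta>)" \<Delta>]
      by (simp add: matrix_vector_mul_assoc[symmetric] inner_commute)
    also have "\<dots> = (Pp *v (transpose A *v \<Delta>)) \<bullet> (Pp *v (transpose A *v \<Delta>))"
      unfolding Pp_def by (rule perp_facts(3)[symmetric])
    finally show ?thesis by (simp add: power2_norm_eq_inner)
  qed
  have blK: "bounded_linear (\<lambda>v. (projS_perp S ** transpose A) *v v)" by simp
  have Kb: "norm (Pp *v (transpose A *v \<Delta>)) \<le> K * norm \<Delta>" for \<Delta>
    using onorm[OF blK, of \<Delta>] by (simp add: K_def Pp_def matrix_vector_mul_assoc)
  have K0: "0 \<le> K" unfolding K_def by (rule onorm_pos_le[OF blK])
  define Q where "Q = {sqrt ((\<Delta> \<bullet> ((A ** projS_perp S ** transpose A) *v \<Delta>)) / (norm \<Delta>)^2) | \<Delta>.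
        \<Delta> \<in> (\<lambda>z. z - z0) ` fconj_dom f \<and> \<Delta> \<noteq> 0}"
  have Zdef: "Z = Sup (insert 0 Q)" by (simp add: Z_def Zf_def Q_def)
  have QK: "q \<le> K" if "q \<in> Q" for q
  proof -
    from that obtain \<Delta> where q: "q = sqrt ((\<Delta> \<bullet> ((A ** Pp ** transpose A) *v \<Delta>)) / (norm \<Delta>)^2)"
      and nz: "\<Delta> \<noteq> 0" by (auto simp: Q_def Pp_def)
    have "q = norm (Pp *v (transpose A *v \<Delta>)) / norm \<Delta>"
      using q by (simp add: quad real_sqrt_divide)
    also have "\<dots> \<le> K" using Kb[of \<Delta>] nz by (simp add: divide_le_eq)
    finally show ?thesis .
  qed
  have bdd: "bdd_above (insert 0 Q)" using QK K0 by (auto intro!: bdd_aboveI[of _ K])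
  have Z0: "0 \<le> Z" unfolding Zdef by (rule cSup_upper[OF _ bdd]) simp
  have ZK: "Z \<le> K" unfolding Zdef by (rule cSup_least) (use QK K0 in auto)
  have Zb: "norm (Pp *v (transpose A *v \<Delta>)) \<le> Z * norm \<Delta>"
    if "\<Delta> \<in> (\<lambda>z. z - z0) ` fconj_dom f" for \<Delta>
  proof (cases "\<Delta> = 0")
    case True then show ?thesis by simp
  next
    case False
    then have "norm (Pp *v (transpose A *v \<Delta>)) / norm \<Delta> \<in> Q"
      using that unfolding Q_def Pp_def
      by (intro CollectI exI[of _ \<Delta>]) (simp add: quad[unfolded Pp_def] real_sqrt_divide)
    then have "norm (Pp *v (transpose A *v \<Delta>)) / norm \<Delta> \<le> Z"
      unfolding Zdef by (intro cSup_upper[OF _ bdd]) simp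
    then show ?thesis using False by (simp add: divide_le_eq mult.commute)
  qed
  have z1dom: "z1 \<in> fconj_dom f"
  proof -
    have "fconj f z1 \<le> ereal (w \<bullet> z1 - f w)"
      unfolding fconj_def
    proof (rule SUP_least)
      fix y :: "real^'n"
      have "f w + g w \<bullet> (y - w) \<le> f y" by (rule grad_ineq[OF convex grad])
      then show "ereal (y \<bullet> z1 - f y) \<le> ereal (w \<bullet> z1 - f w)"
        by (simp add: z1_def inner_diff_right inner_commute)
    qed
    then show ?thesis unfolding fconj_dom_def using le_less_trans by fastforce
  qed
  have DZ: "norm (Pp *v (transpose A *v D)) \<le> Z * norm D"
    by (rule Zb) (use z1dom in \<open>auto simp: D_def\<close>)
  obtain i :: 'n where True by blast
  have mu0: "0 \<le> mu"
  proof -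
    have "0 \<le> norm (g (axis i 1) - g 0)" by simp
    also have "\<dots> \<le> mu * norm (axis i (1::real) - 0)" by (rule lip)
    finally show ?thesis by simp
  qed
  have main: "norm e \<le> sqrt (mu / (2 * lam)) * Z * X"
  proof (cases "mu = 0")
    case True
    then have "D = 0" using lip[of w "A *v xstar"] by (simp add: D_def z1_def z0_def)
    then have "e = 0" using AtD lam_pos by simp
    then show ?thesis using Z0 mu0 lam_pos by (simp add: X_def)
  next
    case False
    then have mupos: "mu > 0" using mu0 by simp
    have coc: "(norm D)^2 \<le> mu * (D \<bullet> (w - A *v xstar))"
      using cocoercive[OF convex grad lip mupos, of w "A *v xstar"] by (simp add: D_def z1_def z0_def)
    have "w - A *v xstar = A *v (e - Pp *v xt)"
      by (simp add: w_def Salpha e_def matrix_vector_mult_diff_distrib)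
    then have "D \<bullet> (w - A *v xstar) = (transpose A *v D) \<bullet> (e - Pp *v xt)"
      using inner_matrix_transpose[of A "e - Pp *v xt" D] by (simp add: inner_commute)
    also have "\<dots> = - lam * (e \<bullet> e) + lam * (e \<bullet> (Pp *v xt))"
      by (simp add: AtD inner_diff_right)
    finally have eq1: "D \<bullet> (w - A *v xstar) = - lam * (e \<bullet> e) + lam * (e \<bullet> (Pp *v xt))" .
    have xte: "xt = e + xstar" by (simp add: e_def)
    have "e \<bullet> (Pp *v xt) = e \<bullet> (Pp *v e) + e \<bullet> (Pp *v xstar)"
      by (simp add: xte matrix_vector_right_distrib inner_add_right)
    also have "e \<bullet> (Pp *v e) = (norm (Pp *v e))^2"
      unfolding Pp_def power2_norm_eq_inner by (rule perp_facts(3)[symmetric])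
    also have "e \<bullet> (Pp *v xstar) = (Pp *v e) \<bullet> xstar"
      unfolding Pp_def by (rule perp_facts(1)[symmetric])
    finally have eq2: "e \<bullet> (Pp *v xt) = (norm (Pp *v e))^2 + (Pp *v e) \<bullet> xstar" .
    have cs: "(Pp *v e) \<bullet> xstar \<le> norm (Pp *v e) * X" unfolding X_def by (rule norm_cauchy_schwarz)
    have "Pp *v (transpose A *v D) = - lam *\<^sub>R (Pp *v e)"
      by (simp add: AtD matrix_vector_mult_scaleR)
    then have "norm (Pp *v (transpose A *v D)) = lam * norm (Pp *v e)" using lam_pos by simp
    then have pb: "lam * norm (Pp *v e) \<le> Z * norm D" using DZ by simp
    define t where "t = norm D"
    define p where "p = norm (Pp *v e)"
    define E where "E = norm e"
    have t0: "0 \<le> t" and p0: "0 \<le> p" and E0: "0 \<le> E" and X0: "0 \<le> X"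
      by (auto simp: t_def p_def E_def X_def)
    have ineq: "t^2 \<le> mu * (- lam * E^2 + lam * p^2 + lam * p * X)"
    proof -
      have "t^2 \<le> mu * (- lam * E^2 + lam * (p^2 + (Pp *v e) \<bullet> xstar))"
        using coc eq1 eq2 by (simp add: t_def E_def p_def power2_norm_eq_inner)
      also have "\<dots> \<le> mu * (- lam * E^2 + lam * (p^2 + p * X))"
        using cs mupos lam_pos by (simp add: p_def mult_left_mono)
      finally show ?thesis by (simp add: algebra_simps)
    qed
    have pb': "lam * p \<le> Z * t" using pb by (simp add: p_def t_def)
    have lg: "2 * mu * Z^2 \<le> lam" using lam_ge by (simp add: Z_def z0_def)
    have s1: "lam * (lam * p^2) \<le> Z^2 * t^2"
    proof -
      have "(lam * p)^2 \<le> (Z * t)^2" using pb' lam_pos p0 by (intro power_mono) auto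
      then show ?thesis by (simp add: power2_eq_square algebra_simps)
    qed
    have s2: "mu * (Z^2 * t^2) \<le> lam * t^2 / 2"
      using mult_right_mono[OF lg, of "t^2"] by (simp add: algebra_simps)
    have s3: "mu * (lam * p * X) \<le> mu * (Z * t * X)"
      using mult_left_mono[OF mult_right_mono[OF pb' X0], of mu] mupos by simp
    have s4: "2 * mu * (Z * t * X) - t^2 \<le> mu^2 * Z^2 * X^2"
      using sum_power2_ge_zero[of "t - mu * Z * X" 0] by (simp add: power2_eq_square algebra_simps)
    have "lam * t^2 \<le> mu * (- lam * lam * E^2 + lam * (lam * p^2) + lam * (lam * p * X))"
      using mult_left_mono[OF ineq, of lam] lam_pos by (simp add: algebra_simps)
    have key: "2 * lam * mu * E^2 \<le> mu^2 * Z^2 * X^2"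
    proof -
      have a: "t^2 \<le> - mu * lam * E^2 + mu * (lam * p^2) + mu * (lam * p * X)"
        using ineq by (simp add: algebra_simps)
      have b1: "mu * (lam * (lam * p^2)) \<le> mu * (Z^2 * t^2)"
        using mult_left_mono[OF s1, of mu] mupos by simp
      have b2: "mu * (lam * (lam * p^2)) \<le> lam * t^2 / 2" using b1 s2 by linarith
      have b: "lam * (mu * (lam * p^2)) \<le> lam * (t^2 / 2)" using b2 by (simp add: ac_simps)
      have c: "mu * (lam * p^2) \<le> t^2 / 2"
        using b lam_pos by (simp add: mult_le_cancel_left_pos)
      from a c s3 s4 show ?thesis by (simp add: algebra_simps) 
    qed
    then have "E^2 \<le> mu / (2 * lam) * (Z * X)^2"
    proof -
      assume a: "2 * lam * mu * E^2 \<le> mu^2 * Z^2 * X^2"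
      have "(2 * lam * mu) * E^2 \<le> (2 * lam * mu) * (mu / (2 * lam) * (Z * X)^2)"
        using a mupos lam_pos by (simp add: power2_eq_square field_simps)
      then have "2 * (lam * E\<^sup>2) \<le> mu * (Z * X)\<^sup>2" using mupos lam_pos by (simp add: mult_le_cancel_left_pos)
      then show ?thesis using lam_pos by (simp add: pos_le_divide_eq algebra_simps)
    qed
    then have "sqrt (E^2) \<le> sqrt (mu / (2 * lam) * (Z * X)^2)" by (rule real_sqrt_le_mono)
    moreover have "sqrt (mu / (2 * lam) * (Z * X)^2) = sqrt (mu / (2 * lam)) * (Z * X)"
      using Z0 X0 by (simp only: real_sqrt_mult real_sqrt_abs) (simp add: abs_mult)
    moreover have "sqrt (E^2) = E" using E0 by simp
    ultimately have "E \<le> sqrt (mu / (2 * lam)) * (Z * X)" by simp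
    then show ?thesis by (simp add: E_def mult.assoc)
  qed
  have second: "sqrt (mu / (2 * lam)) * Z * X \<le> sqrt (mu / (2 * lam)) * K * X"
    using ZK mu0 lam_pos by (intro mult_right_mono mult_left_mono) (auto simp: X_def)
  show ?thesis using main second
    by (simp add: e_def xt_def z1_def w_def Z_def z0_def K_def X_def)
qed


end
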